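(* Let $m,n,T$ be positive integers with $T\ge 2$, let $\mathbf{G}\in\mathbb{F}_2^{n\times m}$ have $n$ distinct nonzero rows $\mathbf{g}_1,\dots,\mathbf{g}_n$ spanning a subspace of dimension $T$, and let $\mathbf{A}\in\mathbb{F}_2^{T\times m}$ be a matrix whose rows form a basis of the row space of $\mathbf{G}$. Let $1\le k<\lceil T/2\rceil$, put $T_c=\lceil T/(2k-1)\rceil$ and $T_{\text{last}}=T-(2k-1)(T_c-1)$, and define $$T_{\text{ub}}=\begin{cases}2^T & \text{if } k=1,\\ 2(2k+1)^{T_c-1} & \text{if } k\neq 1 \text{ and } T_{\text{last}}=1,\\ (2k+1)^{T_c-1}(T_{\text{last}}+2) & \text{otherwise.}\end{cases}$$ Then there exists a matrix $\mathbf{P}\in\mathbb{F}_2^{T_k\times T}$ with $T_k\le\min\{n,T_{\text{ub}}\}$ such that every $\mathbf{g}_i$ is the sum over $\mathbb{F}_2$ of at most $k$ rows of $\mathbf{P}\mathbf{A}$. Moreover, for $k\neq 1$, $T_{\text{ub}}=2^{O\left(\frac{T}{k}\log k\right)}$.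
   Context: Such a $\mathbf{P}$ is called a $k$-limited-access scheme with $T_k$ transmissions for the coding matrix $\mathbf{A}$. Logarithms are base 2. *)

theory Defs
  imports "HOL-Analysis.Analysis" "HOL-Library.Z2"
begin

(* F_2 is the field type bit from HOL-Library.Z2; vectors in F_2^m are bit ^ 'm. *)

definition Tc :: "nat \<Rightarrow> nat \<Rightarrow> nat" where
  "Tc T k = nat \<lceil>real T / real (2*k - 1)\<rceil>"

definition Tlast :: "nat \<Rightarrow> nat \<Rightarrow> nat" where
  "Tlast T k = T - (2*k - 1) * (Tc T k - 1)"

definition Tub :: "nat \<Rightarrow> nat \<Rightarrow> nat" where
  "Tub T k = (if k = 1 then 2 ^ T
              else if Tlast T k = 1 then 2 * (2*k + 1) ^ (Tc T k - 1)
              else (2*k + 1) ^ (Tc T k - 1) * (Tlast T k + 2))"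

end

theory Submission
  imports Defs
begin
lemma bitvec_add_self: "(x::bit^'m) + x = 0"
  by (simp add: vec_eq_iff)
lemma bitvec_minus: "- (x::bit^'m) = x"
  by (simp add: vec_eq_iff)

lemma multi_to_set:
  fixes r :: "nat \<Rightarrow> bit^'m"
  shows "\<forall>t<k. r t \<in> R \<Longrightarrow> \<exists>S\<subseteq>R. finite S \<and> card S \<le> k \<and> sum id S = (\<Sum>t<k. r t)"
proof (induction k)
  case 0 then show ?case by (intro exI[of _ "{}"]) auto
next
  case (Suc k)
  then obtain S where S: "S \<subseteq> R" "finite S" "card S \<le> k" "sum id S = (\<Sum>t<k. r t)" by auto
  have rk: "r k \<in> R" using Suc.prems by auto
  show ?case
  proof (cases "r k \<in> S")
    case True
    have "sum id (S - {r k}) = sum id S - r k" using True S(2) by (simp add: sum_diff1)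
    also have "\<dots> = sum id S + r k" by (metis bitvec_minus diff_conv_add_uminus)
    finally show ?thesis using S True
      by (intro exI[of _ "S - {r k}"]) (auto simp: card_Diff1_le le_SucI intro: order_trans[OF card_Diff1_le])
  next
    case False
    show ?thesis using S False rk
      by (intro exI[of _ "insert (r k) S"]) (auto simp: add.commute)
  qed
qed

definition Opt :: "(nat \<Rightarrow> 'a::comm_monoid_add) \<Rightarrow> nat set \<Rightarrow> 'a set" where
  "Opt a B = insert 0 (insert (sum a B) (a ` B))"

lemma fill_list:
  fixes a :: "nat \<Rightarrow> 'a::comm_monoid_add"
  assumes "finite V"
  shows "card V \<le> k \<Longrightarrow> \<exists>l. (\<forall>t<k. l t \<in> insert 0 (a ` V)) \<and> (\<Sum>t<k. l t) = sum a V"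
  using assms
proof (induction V arbitrary: k rule: finite_induct)
  case empty
  then show ?case by (intro exI[of _ "\<lambda>_. 0"]) auto
next
  case (insert x V)
  then obtain k' where k': "k = Suc k'" "card V \<le> k'" by (cases k) auto
  then obtain l where l: "\<forall>t<k'. l t \<in> insert 0 (a ` V)" "(\<Sum>t<k'. l t) = sum a V"
    using insert.IH by blast
  show ?case
  proof (intro exI[of _ "l(k' := a x)"] conjI allI impI)
    fix t assume "t < k" then show "(l(k' := a x)) t \<in> insert 0 (a ` insert x V)"
      using l(1) k' by (auto simp: less_Suc_eq)
  next
    have "(\<Sum>t<k'. (l(k' := a x)) t) = (\<Sum>t<k'. l t)" by (rule sum.cong) auto
    then show "(\<Sum>t<k. (l(k' := a x)) t) = sum a (insert x V)"
      using k' l insert.hyps by (simp add: add.commute)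
  qed
qed

lemma chunk_decomp:
  fixes a :: "nat \<Rightarrow> bit^'m"
  assumes B: "finite B" "card B \<le> 2*k-1" and k: "k \<ge> 1" and W: "W \<subseteq> B"
  shows "\<exists>l. (\<forall>t<k. l t \<in> Opt a B) \<and> (\<Sum>t<k. l t) = sum a W"
proof (cases "card W \<le> k")
  case True
  have "finite W" using W B finite_subset by blast
  from fill_list[OF this True] obtain l where
    "\<forall>t<k. l t \<in> insert 0 (a ` W)" "(\<Sum>t<k. l t) = sum a W" by blast
  then show ?thesis using W unfolding Opt_def by (intro exI[of _ l]) auto
next
  case False
  have fW: "finite W" using W B finite_subset by blast
  have "card (B - W) = card B - card W" using W fW by (simp add: card_Diff_subset)
  then have cBW: "card (B - W) \<le> k - 1" using False B by simp
  from fill_list[OF _ cBW, of a] B obtain l where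
    l: "\<forall>t<k-1. l t \<in> insert 0 (a ` (B - W))" "(\<Sum>t<k-1. l t) = sum a (B - W)" by auto
  have kk: "k = Suc (k - 1)" using k by simp
  have sB: "sum a B = sum a W + sum a (B - W)"
    using sum.subset_diff[OF W B(1)] by (simp add: add.commute)
  show ?thesis
  proof (intro exI[of _ "l(k-1 := sum a B)"] conjI allI impI)
    fix t assume "t < k" then show "(l(k-1 := sum a B)) t \<in> Opt a B"
    proof (cases "t < k - 1")
      case True then show ?thesis using l(1) unfolding Opt_def by auto
    next
      case False then have "t = k - 1" using \<open>t < k\<close> by linarith
      then show ?thesis unfolding Opt_def by simp
    qed
  next
    have "(\<Sum>t<k-1. (l(k-1 := sum a B)) t) = (\<Sum>t<k-1. l t)" by (rule sum.cong) auto
    then have "(\<Sum>t<k. (l(k-1 := sum a B)) t) = sum a (B - W) + sum a B"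
      using l(2) by (subst kk) simp
    also have "\<dots> = sum a W" unfolding sB
      by (metis add.assoc add.commute add_0_right bitvec_add_self)
    finally show "(\<Sum>t<k. (l(k-1 := sum a B)) t) = sum a W" .
  qed
qed

lemma card_Opt: assumes f: "finite B" shows "card (Opt a B) \<le> card B + 2"
proof -
  have "card (insert 0 (insert (sum a B) (a ` B))) \<le> Suc (card (insert (sum a B) (a ` B)))"
    by (simp add: card_insert_if f)
  also have "card (insert (sum a B) (a ` B)) \<le> Suc (card (a ` B))"
    by (simp add: card_insert_if f)
  also have "card (a ` B) \<le> card B" by (rule card_image_le[OF f])
  finally show ?thesis by (simp add: Opt_def)
qed

lemma card_Opt1: "card B = 1 \<Longrightarrow> card (Opt a B) \<le> 2"
  by (auto simp: Opt_def card_Suc_eq card_insert_if)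

lemma Tc_bounds:
  assumes k: "k \<ge> 1" and T: "T \<ge> 1"
  shows "(2*k-1)*(Tc T k - 1) < T" "T \<le> (2*k-1) * Tc T k" "Tc T k \<ge> 1"
        "real (Tc T k) < real T / real (2*k-1) + 1"
proof -
  define c where "c = 2*k-1"
  have c1: "c \<ge> 1" using k by (simp add: c_def)
  have rc: "real c \<ge> 1" using c1 by simp
  define x where "x = real T / real c"
  have xpos: "x > 0" using T rc by (simp add: x_def)
  have cpos: "\<lceil>x\<rceil> \<ge> 0" using xpos by linarith
  have m: "real (Tc T k) = of_int \<lceil>x\<rceil>"
    unfolding Tc_def x_def c_def[symmetric] using cpos x_def by (simp add: of_nat_nat)
  have m1: "real (Tc T k) \<ge> x" "real (Tc T k) < x + 1" using ceiling_correct[of x] m by auto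
  show "real (Tc T k) < real T / real (2*k-1) + 1" using m1 by (simp add: x_def c_def)
  have "real (Tc T k) > 0" using m1 xpos by linarith
  then show m0: "Tc T k \<ge> 1" by simp
  have "real T \<le> real c * real (Tc T k)" using m1(1) rc by (simp add: x_def field_simps)
  then have "T \<le> c * Tc T k" by (simp only: of_nat_mult[symmetric] of_nat_le_iff)
  then show "T \<le> (2*k-1) * Tc T k" by (simp add: c_def)
  have "real (Tc T k - 1) < x" using m1(2) m0 by (simp add: of_nat_diff)
  then have "real c * real (Tc T k - 1) < real T" using rc by (simp add: x_def field_simps)
  then have "c * (Tc T k - 1) < T" by (simp only: of_nat_mult[symmetric] of_nat_less_iff)
  then show "(2*k-1)*(Tc T k - 1) < T" by (simp add: c_def)
qed

definition chunk :: "nat \<Rightarrow> nat \<Rightarrow> nat \<Rightarrow> nat set" where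
  "chunk T c b = {b*c ..< min T (Suc b * c)}"

lemma chunk_div: "j \<in> chunk T c b \<Longrightarrow> j div c = b"
  unfolding chunk_def by (intro div_nat_eqI) (auto simp: mult.commute)

lemma chunk_disj: "b \<noteq> b' \<Longrightarrow> chunk T c b \<inter> chunk T c b' = {}"
  using chunk_div by blast

lemma chunk_sub: "chunk T c b \<subseteq> {..<T}"
  unfolding chunk_def by auto

lemma chunk_card_le: "card (chunk T c b) \<le> c"
  unfolding chunk_def by auto

lemma chunk_union:
  assumes "c \<ge> 1" "T \<le> c * m"
  shows "(\<Union>b\<in>{..<m}. chunk T c b) = {..<T}"
proof
  show "(\<Union>b\<in>{..<m}. chunk T c b) \<subseteq> {..<T}" using chunk_sub by blast
  show "{..<T} \<subseteq> (\<Union>b\<in>{..<m}. chunk T c b)"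
  proof
    fix j assume j: "j \<in> {..<T}"
    have "j < c * m" using j assms by auto
    then have "j div c < m" using assms(1) by (simp add: div_less_iff_less_mult mult.commute)
    moreover have "j \<in> chunk T c (j div c)"
    proof -
      have e: "j div c * c + j mod c = j" by (rule div_mult_mod_eq)
      have "j mod c < c" using assms(1) by simp
      then have "j div c * c \<le> j" "j < j div c * c + c" using e by linarith+
      then have "j div c * c \<le> j" "j < Suc (j div c) * c" by simp_all
      then show ?thesis unfolding chunk_def using j by auto
    qed
    ultimately show "j \<in> (\<Union>b\<in>{..<m}. chunk T c b)" by blast
  qed
qed

lemma chunk_card_full: "Suc b * c \<le> T \<Longrightarrow> card (chunk T c b) = c"
  unfolding chunk_def by auto

lemma chunk_card_last: "c * (m - 1) < T \<Longrightarrow> T \<le> c * m \<Longrightarrow> m \<ge> 1 \<Longrightarrow>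
    card (chunk T c (m - 1)) = T - c * (m - 1)"
  unfolding chunk_def by (cases m) (auto simp: min_def mult.commute)

lemma prod_bound:
  fixes a :: "nat \<Rightarrow> bit^'m"
  assumes k: "k \<ge> 1" and T: "T \<ge> 1"
  shows "(\<Prod>b<Tc T k. card (Opt a (chunk T (2*k-1) b))) \<le> Tub T k"
proof -
  define c where "c = 2*k-1"
  define m where "m = Tc T k"
  note tb = Tc_bounds[OF k T, folded c_def m_def]
  have fin: "finite (chunk T c b)" for b unfolding chunk_def by simp
  show ?thesis
  proof (cases "k = 1")
    case True
    then have c1: "c = 1" by (simp add: c_def)
    have mT: "m = T" using tb c1 by simp
    have "(\<Prod>b<m. card (Opt a (chunk T c b))) \<le> (\<Prod>b<m. 2)"
    proof (rule prod_mono)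
      fix b
      have "card (chunk T c b) \<le> 1" using chunk_card_le[of T c b] c1 by simp
      then have "card (chunk T c b) = 0 \<or> card (chunk T c b) = 1" by linarith
      then have "card (Opt a (chunk T c b)) \<le> 2"
      proof
        assume "card (chunk T c b) = 0"
        then have "chunk T c b = {}" using fin by simp
        then show ?thesis by (simp add: Opt_def)
      next
        assume "card (chunk T c b) = 1" then show ?thesis by (rule card_Opt1)
      qed
      then show "0 \<le> card (Opt a (chunk T c b)) \<and> card (Opt a (chunk T c b)) \<le> 2" by simp
    qed
    also have "\<dots> = 2 ^ T" using mT by simp
    finally show ?thesis using True by (simp add: Tub_def c_def m_def)
  next
    case False
    then have k2: "k \<ge> 2" using k by simp
    have mS: "m = Suc (m - 1)" using tb by simp
    have "(\<Prod>b<m - 1. card (Opt a (chunk T c b))) \<le> (\<Prod>b<m - 1. 2*k+1)"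
    proof (rule prod_mono)
      fix b assume b: "b \<in> {..<m-1}"
      then have "Suc b * c \<le> (m - 1) * c" by (intro mult_le_mono1) auto
      also have "\<dots> \<le> T" using tb by (simp add: mult.commute)
      finally have "card (chunk T c b) = c" by (rule chunk_card_full)
      then have "card (Opt a (chunk T c b)) \<le> 2*k+1" using card_Opt[OF fin, of a b] k
        by (simp add: c_def)
      then show "0 \<le> card (Opt a (chunk T c b)) \<and> card (Opt a (chunk T c b)) \<le> 2*k+1" by simp
    qed
    then have P1: "(\<Prod>b<m - 1. card (Opt a (chunk T c b))) \<le> (2*k+1)^(m-1)" by simp
    have cl: "card (chunk T c (m - 1)) = Tlast T k"
      using chunk_card_last[of c m T] tb by (simp add: Tlast_def c_def m_def)
    have P2: "card (Opt a (chunk T c (m - 1))) \<le> (if Tlast T k = 1 then 2 else Tlast T k + 2)"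
      using cl card_Opt[OF fin, of a "m-1"] card_Opt1[of "chunk T c (m-1)" a] by auto
    have "(\<Prod>b<m. card (Opt a (chunk T c b))) =
        (\<Prod>b<m - 1. card (Opt a (chunk T c b))) * card (Opt a (chunk T c (m - 1)))"
      by (subst mS) (simp del: Suc_diff_1 add: prod.lessThan_Suc)
    also have "\<dots> \<le> (2*k+1)^(m-1) * (if Tlast T k = 1 then 2 else Tlast T k + 2)"
      by (rule mult_le_mono[OF P1 P2])
    finally show ?thesis using False by (simp add: Tub_def c_def m_def split: if_splits)
  qed
qed

lemma smult_bit: "(u::bit) *s (v::bit^'m) = (if u = 1 then v else 0)"
  by (cases u) auto

lemma construct:
  fixes a :: "nat \<Rightarrow> bit^'m"
  assumes k: "k \<ge> 1" and T: "T \<ge> 1"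
  shows "\<exists>R. finite R \<and> card R \<le> Tub T k \<and> R \<subseteq> vec.span (a ` {..<T}) \<and>
           (\<forall>u. \<exists>S\<subseteq>R. card S \<le> k \<and> sum id S = (\<Sum>j<T. u j *s a j))"
proof -
  define c where "c = 2*k-1"
  define m where "m = Tc T k"
  note tb = Tc_bounds[OF k T, folded c_def m_def]
  define B where "B = chunk T c"
  have fin: "finite (B b)" for b unfolding B_def chunk_def by simp
  define R where "R = (\<lambda>f. \<Sum>b<m. f b) ` (\<Pi>\<^sub>E b\<in>{..<m}. Opt a (B b))"
  have finO: "finite (Opt a (B b))" for b using fin by (simp add: Opt_def)
  have "finite R" unfolding R_def by (intro finite_imageI finite_PiE) (auto simp: finO)
  moreover have "card R \<le> Tub T k"
  proof -
    have "card R \<le> card (\<Pi>\<^sub>E b\<in>{..<m}. Opt a (B b))" unfolding R_def by (rule card_image_le)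
      (intro finite_PiE, auto simp: finO)
    also have "\<dots> = (\<Prod>b<m. card (Opt a (B b)))" by (simp add: card_PiE)
    also have "\<dots> \<le> Tub T k" using prod_bound[OF k T, of a] by (simp add: B_def c_def m_def)
    finally show ?thesis .
  qed
  moreover have "R \<subseteq> vec.span (a ` {..<T})"
  proof
    fix v assume "v \<in> R"
    then obtain f where f: "f \<in> (\<Pi>\<^sub>E b\<in>{..<m}. Opt a (B b))" and v: "v = (\<Sum>b<m. f b)"
      unfolding R_def by blast
    have "f b \<in> vec.span (a ` {..<T})" if "b < m" for b
    proof -
      have sp: "sum a (B b) \<in> vec.span (a ` {..<T})"
        by (rule vec.span_sum) (use chunk_sub[of T c b] in \<open>auto simp: B_def intro: vec.span_base\<close>)
      have O: "Opt a (B b) \<subseteq> vec.span (a ` {..<T})"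
        using chunk_sub[of T c b] sp unfolding Opt_def B_def
        by (auto intro: vec.span_zero vec.span_base)
      then show ?thesis using f that by auto
    qed
    then show "v \<in> vec.span (a ` {..<T})" unfolding v by (intro vec.span_sum) auto
  qed
  moreover have "\<exists>S\<subseteq>R. card S \<le> k \<and> sum id S = (\<Sum>j<T. u j *s a j)" for u
  proof -
    define W where "W b = {j \<in> B b. u j = 1}" for b
    have "\<forall>b. \<exists>l. (\<forall>t<k. l t \<in> Opt a (B b)) \<and> (\<Sum>t<k. l t) = sum a (W b)"
    proof
      fix b show "\<exists>l. (\<forall>t<k. l t \<in> Opt a (B b)) \<and> (\<Sum>t<k. l t) = sum a (W b)"
        by (rule chunk_decomp[OF fin _ k]) (auto simp: W_def B_def c_def chunk_card_le)
    qed
    then obtain L where L: "\<And>b t. t < k \<Longrightarrow> L b t \<in> Opt a (B b)"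
        "\<And>b. (\<Sum>t<k. L b t) = sum a (W b)" by metis
    define r where "r t = (\<Sum>b<m. L b t)" for t
    have rR: "\<forall>t<k. r t \<in> R"
    proof (intro allI impI)
      fix t assume t: "t < k"
      have "restrict (\<lambda>b. L b t) {..<m} \<in> (\<Pi>\<^sub>E b\<in>{..<m}. Opt a (B b))" using L(1)[OF t] by auto
      moreover have "r t = (\<Sum>b<m. restrict (\<lambda>b. L b t) {..<m} b)" unfolding r_def by simp
      ultimately show "r t \<in> R" unfolding R_def by blast
    qed
    from multi_to_set[OF rR] obtain S where S: "S \<subseteq> R" "card S \<le> k" "sum id S = (\<Sum>t<k. r t)"
      by blast
    have "(\<Sum>t<k. r t) = (\<Sum>b<m. \<Sum>t<k. L b t)" unfolding r_def by (rule sum.swap)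
    also have "\<dots> = (\<Sum>b<m. sum a (W b))" using L(2) by simp
    also have "\<dots> = (\<Sum>b<m. \<Sum>j\<in>B b. u j *s a j)"
    proof (rule sum.cong[OF refl])
      fix b show "sum a (W b) = (\<Sum>j\<in>B b. u j *s a j)"
        unfolding W_def using fin by (simp add: sum.inter_filter smult_bit)
    qed
    also have "\<dots> = (\<Sum>j\<in>(\<Union>b\<in>{..<m}. B b). u j *s a j)"
      by (rule sum.UNION_disjoint[symmetric]) (auto simp: B_def chunk_disj fin[unfolded B_def])
    also have "(\<Union>b\<in>{..<m}. B b) = {..<T}" unfolding B_def
      by (rule chunk_union) (use tb k in \<open>auto simp: c_def\<close>)
    finally show ?thesis using S by auto
  qed
  ultimately show ?thesis by blast
qed

lemma asym:
  assumes k: "2 \<le> k" and kT: "real k < real_of_int \<lceil>real T / 2\<rceil>"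
  shows "log 2 (real (Tub T k)) \<le> 6 * (real T / real k) * log 2 (real k)"
proof -
  have "int k < \<lceil>real T / 2\<rceil>" using kT by linarith
  then have "real_of_int (int k) < real T / 2" by (simp only: less_ceiling_iff)
  then have T2: "real T > 2 * real k" by simp
  then have T: "T \<ge> 1" using k by (cases T) auto
  have k1: "k \<ge> 1" using k by simp
  define m where "m = Tc T k"
  note tb = Tc_bounds[OF k1 T, folded m_def]
  have tl: "Tlast T k \<le> 2*k-1" using tb by (simp add: Tlast_def m_def algebra_simps)
  have mS: "m = Suc (m - 1)" using tb by simp
  have "Tub T k \<le> (2*k+1)^m"
  proof -
    have "(2*k+1)^m = (2*k+1)^(m-1) * (2*k+1)" by (subst mS) (simp del: Suc_diff_1)
    moreover have "(if Tlast T k = 1 then 2 else Tlast T k + 2) \<le> 2*k+1" using tl k by auto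
    moreover have "Tub T k = (2*k+1)^(m-1) * (if Tlast T k = 1 then 2 else Tlast T k + 2)"
      using k by (simp add: Tub_def m_def)
    ultimately show ?thesis by (metis mult_le_mono2)
  qed
  also have "(2*k+1)^m \<le> (k^3)^m"
  proof (rule power_mono)
    have kk: "4 \<le> k * k" using mult_le_mono[of 2 k 2 k] k by simp
    have "4 * k \<le> (k * k) * k" by (rule mult_le_mono1[OF kk])
    then have "2*k+1 \<le> k*k*k" using k by linarith
    then show "2*k+1 \<le> k^3" by (simp only: power3_eq_cube)
  qed simp
  finally have ub: "real (Tub T k) \<le> real k ^ (3*m)" by (simp add: power_mult of_nat_power[symmetric] del: of_nat_power)
  have pos: "Tub T k > 0" using k unfolding Tub_def by auto
  have "log 2 (real (Tub T k)) \<le> log 2 (real k ^ (3*m))"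
    using ub pos k by (subst log_le_cancel_iff) auto
  also have "\<dots> = real (3*m) * log 2 (real k)" using k by (simp add: log_nat_power)
  also have "\<dots> \<le> 6 * (real T / real k) * log 2 (real k)"
  proof (rule mult_right_mono)
    have rk: "real k \<ge> 2" using k by simp
    have a1: "real T / real (2*k-1) \<le> real T / real k" using k
      by (intro divide_left_mono) (auto simp: of_nat_diff)
    have a2: "1 < real T / real k" using T2 rk by (simp add: field_simps)
    have "real m < real T / real (2*k-1) + 1" using tb by simp
    then show "real (3*m) \<le> 6 * (real T / real k)" using a1 a2 by simp
    show "0 \<le> log 2 (real k)" using k by simp
  qed
  finally show ?thesis .
qed

lemma span_rep:
  fixes a :: "nat \<Rightarrow> bit^'m"
  assumes inj: "inj_on a {..<T}" and v: "v \<in> vec.span (a ` {..<T})"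
  shows "\<exists>u. v = (\<Sum>j<T. u j *s a j)"
proof -
  from v obtain w where w: "v = (\<Sum>x\<in>a ` {..<T}. w x *s x)"
    using vec.span_finite[of "a ` {..<T}"] by auto
  also have "\<dots> = (\<Sum>j<T. w (a j) *s a j)" using sum.reindex[OF inj] by simp
  finally have V: "v = (\<Sum>j<T. w (a j) *s a j)" .
  show ?thesis by (rule exI[of _ "\<lambda>j. w (a j)"]) (simp add: V)
qed

theorem theorem1:
  fixes g :: "nat \<Rightarrow> bit ^ 'm::finite"
    and a :: "nat \<Rightarrow> bit ^ 'm"
    and n T k :: nat
  assumes "n \<ge> 1" and "T \<ge> 2"
    and "inj_on g {..<n}" and "\<forall>i<n. g i \<noteq> 0"
    and "vec.dim (g ` {..<n}) = T"
    and "inj_on a {..<T}" and "vec.independent (a ` {..<T})"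
    and "vec.span (a ` {..<T}) = vec.span (g ` {..<n})"
    and "1 \<le> k" and "real k < real_of_int \<lceil>real T / 2\<rceil>"
  shows "(\<exists>Tk (P :: nat \<Rightarrow> nat \<Rightarrow> bit).
            Tk \<le> min n (Tub T k) \<and>
            (\<forall>i<n. \<exists>S. S \<subseteq> {..<Tk} \<and> card S \<le> k \<and>
                 g i = (\<Sum>r\<in>S. \<Sum>j<T. P r j *s a j)))
       \<and> (\<exists>C::real. \<forall>T' k'::nat. 2 \<le> k' \<and> real k' < real_of_int \<lceil>real T' / 2\<rceil> \<longrightarrow>
            log 2 (real (Tub T' k')) \<le> C * (real T' / real k') * log 2 (real k'))"
proof
  have T1: "T \<ge> 1" using assms(2) by simp
  have gsp: "g i \<in> vec.span (a ` {..<T})" if "i < n" for i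
    using assms(8) that by (auto intro: vec.span_base)
  have grep: "\<exists>u. g i = (\<Sum>j<T. u j *s a j)" if "i < n" for i
    using span_rep[OF assms(6) gsp[OF that]] .
  show "\<exists>Tk (P :: nat \<Rightarrow> nat \<Rightarrow> bit).
            Tk \<le> min n (Tub T k) \<and>
            (\<forall>i<n. \<exists>S. S \<subseteq> {..<Tk} \<and> card S \<le> k \<and>
                 g i = (\<Sum>r\<in>S. \<Sum>j<T. P r j *s a j))"
  proof (cases "n \<le> Tub T k")
    case True
    define P where "P r = (SOME u. g r = (\<Sum>j<T. u j *s a j))" for r
    have "\<forall>i<n. \<exists>S. S \<subseteq> {..<n} \<and> card S \<le> k \<and> g i = (\<Sum>r\<in>S. \<Sum>j<T. P r j *s a j)"
    proof (intro allI impI)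
      fix i assume i: "i < n"
      have "g i = (\<Sum>j<T. P i j *s a j)" unfolding P_def using someI_ex[OF grep[OF i]] by simp
      then show "\<exists>S. S \<subseteq> {..<n} \<and> card S \<le> k \<and> g i = (\<Sum>r\<in>S. \<Sum>j<T. P r j *s a j)"
        using i assms(9) by (intro exI[of _ "{i}"]) auto
    qed
    then show ?thesis using True by (intro exI[of _ n] exI[of _ P]) auto
  next
    case False
    obtain R where R: "finite R" "card R \<le> Tub T k" "R \<subseteq> vec.span (a ` {..<T})"
      "\<And>u. \<exists>S\<subseteq>R. card S \<le> k \<and> sum id S = (\<Sum>j<T. u j *s a j)"
      using construct[OF assms(9) T1, of a] by blast
    obtain e where e: "bij_betw e {0..<card R} R" using ex_bij_betw_nat_finite[OF R(1)] by blast
    then have e': "bij_betw e {..<card R} R" by (simp add: atLeast0LessThan)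
    define P where "P r = (SOME u. e r = (\<Sum>j<T. u j *s a j))" for r
    have Pe: "(\<Sum>j<T. P r j *s a j) = e r" if "r < card R" for r
    proof -
      have "e r \<in> R" using e' that bij_betwE by blast
      then have "\<exists>u. e r = (\<Sum>j<T. u j *s a j)" using span_rep[OF assms(6)] R(3) by blast
      then have "e r = (\<Sum>j<T. P r j *s a j)" unfolding P_def by (rule someI_ex)
      then show ?thesis by simp
    qed
    have "\<forall>i<n. \<exists>S. S \<subseteq> {..<card R} \<and> card S \<le> k \<and> g i = (\<Sum>r\<in>S. \<Sum>j<T. P r j *s a j)"
    proof (intro allI impI)
      fix i assume i: "i < n"
      obtain u where u: "g i = (\<Sum>j<T. u j *s a j)" using grep[OF i] by blast
      obtain Si where Si: "Si \<subseteq> R" "card Si \<le> k" "sum id Si = g i" using R(4)[of u] u by metis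
      define S where "S = {r \<in> {..<card R}. e r \<in> Si}"
      have injS: "inj_on e S"
        by (rule inj_on_subset[of e "{..<card R}"]) (use e' in \<open>auto simp: S_def bij_betw_def\<close>)
      have eS: "e ` S = Si"
      proof
        show "e ` S \<subseteq> Si" unfolding S_def by auto
        show "Si \<subseteq> e ` S"
        proof
          fix x assume x: "x \<in> Si"
          then have "x \<in> e ` {..<card R}" using e' Si(1) unfolding bij_betw_def by auto
          then obtain r where "r < card R" "x = e r" by auto
          then show "x \<in> e ` S" using x unfolding S_def by auto
        qed
      qed
      have "(\<Sum>r\<in>S. \<Sum>j<T. P r j *s a j) = (\<Sum>r\<in>S. e r)"
        by (rule sum.cong) (auto simp: S_def Pe)
      also have "\<dots> = sum id (e ` S)" using sum.reindex[OF injS, of id] by simp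
      also have "\<dots> = g i" using eS Si by simp
      finally have "g i = (\<Sum>r\<in>S. \<Sum>j<T. P r j *s a j)" by simp
      moreover have "card S = card Si" using card_image[OF injS] eS by simp
      ultimately show "\<exists>S. S \<subseteq> {..<card R} \<and> card S \<le> k \<and> g i = (\<Sum>r\<in>S. \<Sum>j<T. P r j *s a j)"
        using Si(2) by (intro exI[of _ S]) (auto simp: S_def)
    qed
    then show ?thesis using False R(2) by (intro exI[of _ "card R"] exI[of _ P]) auto
  qed
next
  show "\<exists>C::real. \<forall>T' k'::nat. 2 \<le> k' \<and> real k' < real_of_int \<lceil>real T' / 2\<rceil> \<longrightarrow>
            log 2 (real (Tub T' k')) \<le> C * (real T' / real k') * log 2 (real k')"
    using asym by blast
qed

end
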